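(* Let $R$ be a $*$-ring with unity, $a,b\in R$ with $a\lesssim b$, and $h$ a central projection of $R$. Then $ha\lesssim hb$.
   Context: Natural partial order: $a\leq b$ iff there is $x\in R$ with $a=xa=xb=ax^*=bx^*$. Equivalence: $a\sim b$ iff there exist $x,y\in R$ with $aa^*=xx^*$, $bb^*=yy^*$, $a^*a=y^*y$, $b^*b=x^*x$, $x=ax=xb$ and $y=by=ya$. Dominance: $a\lesssim b$ iff $a\sim c$ and $c\leq b$ for some $c\in R$. A projection is $e=e^2=e^*$; central means commuting with all elements. *)

theory Defs
  imports Main
begin

class star_ring = ring_1 +
  fixes star :: "'a \<Rightarrow> 'a"
  assumes star_add: "star (x + y) = star x + star y"
    and star_mult: "star (x * y) = star y * star x"
    and star_star: "star (star x) = x"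

context star_ring
begin

definition npo_le :: "'a \<Rightarrow> 'a \<Rightarrow> bool" where
  "npo_le a b \<longleftrightarrow> (\<exists>x. a = x * a \<and> a = x * b \<and> a = a * star x \<and> a = b * star x)"

definition star_equiv :: "'a \<Rightarrow> 'a \<Rightarrow> bool" where
  "star_equiv a b \<longleftrightarrow> (\<exists>x y. a * star a = x * star x \<and> b * star b = y * star y \<and>
      star a * a = star y * y \<and> star b * b = star x * x \<and>
      x = a * x \<and> x = x * b \<and> y = b * y \<and> y = y * a)"

definition dominated :: "'a \<Rightarrow> 'a \<Rightarrow> bool" where
  "dominated a b \<longleftrightarrow> (\<exists>c. star_equiv a c \<and> npo_le c b)"

definition projection :: "'a \<Rightarrow> bool" where
  "projection e \<longleftrightarrow> e * e = e \<and> star e = e"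

definition central :: "'a \<Rightarrow> bool" where
  "central h \<longleftrightarrow> (\<forall>z. h * z = z * h)"

end

end

theory Submission
  imports Defs
begin

lemma hl1:
  fixes h u v :: "'a :: star_ring"
  assumes p: "h*h = h" and c: "\<And>z. h*z = z*h"
  shows "h*u*(h*v) = h*(u*v)" "star u * h * (h*v) = h*(star u*v)"
        "h*u*(star v*h) = h*(u*star v)"
proof -
  show "h*u*(h*v) = h*(u*v)" by (metis c p mult.assoc)
  show "star u * h * (h*v) = h*(star u*v)" by (metis c p mult.assoc)
  show "h*u*(star v*h) = h*(u*star v)" by (metis c p mult.assoc)
qed

theorem mainTheorem10:
  fixes a b h :: "'a :: star_ring"
  assumes "dominated a b"
    and "projection h" and "central h"
  shows "dominated (h * a) (h * b)"
proof -
  have p: "h*h = h" and s: "star h = h" using assms(2) by (auto simp: projection_def)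
  have c: "\<And>z. h*z = z*h" using assms(3) by (auto simp: central_def)
  have st: "\<And>u. star (h*u) = star u * h" using s by (simp add: star_mult)
  obtain cc x y z where e: "a * star a = x * star x" "cc * star cc = y * star y"
      "star a * a = star y * y" "star cc * cc = star x * x"
      "x = a * x" "x = x * cc" "y = cc * y" "y = y * a"
    and n: "cc = z * cc" "cc = z * b" "cc = cc * star z" "cc = b * star z"
    using assms(1) unfolding dominated_def star_equiv_def npo_le_def by blast
  have "star_equiv (h*a) (h*cc)"
    unfolding star_equiv_def
    apply (rule exI[of _ "h*x"], rule exI[of _ "h*y"])
    apply (simp only: st hl1[OF p c])
    using e by (metis hl1(1)[OF p c])
  moreover have "npo_le (h*cc) (h*b)"
    unfolding npo_le_def
    apply (rule exI[of _ z])
    using n by (metis c mult.assoc)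
  ultimately show ?thesis unfolding dominated_def by blast
qed

end
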